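(* Let $G=(V,E)$ with weight $\mu$ be an infinite, connected, locally finite weighted graph satisfying condition $(p_0)$, let $m>1$, and fix $o\in V$. Assume either $(p,q)\in G_{5.1}=\{(p,q): p+q=m-1,\ p\ge 0,\ q>0\}$, or $(p,q)\in G_{5.2}=\{(p,q): p+q=m-1,\ q<0\}$ with $1<m<3$. Then there exists $k_0>0$ (depending only on $p_0$, $m$, $p$, $q$) such that if for some $\kappa\in(0,k_0)$ there are constants $C>0$ and $n_1$ with $$W_o(n)\le C\, e^{\kappa n}\quad\text{for all } n\ge n_1,$$ then the inequality $\Delta_m u+u^p|\nabla u|^q\le 0$ on $V$ admits no nontrivial positive solution.
   Context: Setting: $G=(V,E)$ is an infinite, connected, locally finite graph with no loops and no multiple edges; $x\sim y$ means $x$ and $y$ are joined by an edge. A weight is a symmetric function $\mu:V\times V\to[0,\infty)$ with $\mu_{xy}=\mu_{yx}>0$ if and only if $x\sim y$; the vertex measure is $\mu(x)=\sum_{y\sim x}\mu_{xy}$. For $m>1$ and $u:V\to\mathbb R$, $\Delta_m u(x)=\frac{1}{\mu(x)}\sum_{y\sim x}\mu_{xy}|u(y)-u(x)|^{m-2}(u(y)-u(x))$ and $|\nabla u(x)|=\big(\sum_{y\sim x}\frac{\mu_{xy}}{2\mu(x)}(u(y)-u(x))^2\big)^{1/2}$. Condition $(p_0)$: there is a constant $p_0>1$ such that $\mu_{xy}/\mu(x)\ge 1/p_0$ for all $x\sim y$. $d(x,y)$ is the graph (shortest path) distance, $B(o,n)=\{x\in V: d(o,x)\le n\}$, and $W_o(n)=\sum_{x\in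 B(o,n),\,y\in V,\,d(o,x)<d(o,y)}\mu_{xy}$. A nontrivial positive solution of $\Delta_m u+u^p|\nabla u|^q\le 0$ is a non-constant function $u:V\to(0,\infty)$ such that $\Delta_m u(x)+u(x)^p|\nabla u(x)|^q\le 0$ for every $x\in V$, with the conventions $0^0=1$, $0^q=0$ for $q>0$, and, for $q<0$, $|\nabla u(x)|^q=+\infty$ when $|\nabla u(x)|=0$ (so the inequality fails at such $x$). *)

theory Defs
  imports Complex_Main
begin

text \<open>A weighted graph on the vertex type 'a is given by a weight function mu;
  x ~ y iff mu x y > 0.  The vertex set is UNIV.\<close>

definition adj :: "('a \<Rightarrow> 'a \<Rightarrow> real) \<Rightarrow> 'a \<Rightarrow> 'a \<Rightarrow> bool" where
  "adj mu x y \<longleftrightarrow> mu x y > 0"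

definition weighted_graph :: "('a \<Rightarrow> 'a \<Rightarrow> real) \<Rightarrow> bool" where
  "weighted_graph mu \<longleftrightarrow>
     infinite (UNIV :: 'a set) \<and>
     (\<forall>x y. mu x y \<ge> 0) \<and>
     (\<forall>x y. mu x y = mu y x) \<and>
     (\<forall>x. mu x x = 0) \<and>
     (\<forall>x. finite {y. adj mu x y}) \<and>
     (\<forall>x y. (adj mu)\<^sup>*\<^sup>* x y)"

definition vmeasure :: "('a \<Rightarrow> 'a \<Rightarrow> real) \<Rightarrow> 'a \<Rightarrow> real" where
  "vmeasure mu x = (\<Sum>y\<in>{y. adj mu x y}. mu x y)"

definition cond_p0 :: "('a \<Rightarrow> 'a \<Rightarrow> real) \<Rightarrow> real \<Rightarrow> bool" where
  "cond_p0 mu p0 \<longleftrightarrow> p0 > 1 \<and> (\<forall>x y. adj mu x y \<longrightarrow> mu x y / vmeasure mu x \<ge> 1 / p0)"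

definition gdist :: "('a \<Rightarrow> 'a \<Rightarrow> real) \<Rightarrow> 'a \<Rightarrow> 'a \<Rightarrow> nat" where
  "gdist mu x y = (LEAST n. (adj mu ^^ n) x y)"

definition ball :: "('a \<Rightarrow> 'a \<Rightarrow> real) \<Rightarrow> 'a \<Rightarrow> nat \<Rightarrow> 'a set" where
  "ball mu v0 n = {x. gdist mu v0 x \<le> n}"

text \<open>W_o(n): sum of mu_xy over x in B(o,n), y with d(o,x) < d(o,y)
  (only neighbours contribute, since mu_xy = 0 otherwise).\<close>
definition W :: "('a \<Rightarrow> 'a \<Rightarrow> real) \<Rightarrow> 'a \<Rightarrow> nat \<Rightarrow> real" where
  "W mu v0 n = (\<Sum>(x,y)\<in>{(x,y). x \<in> ball mu v0 n \<and> adj mu x y \<and> gdist mu v0 x < gdist mu v0 y}. mu x y)"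

definition mlap :: "('a \<Rightarrow> 'a \<Rightarrow> real) \<Rightarrow> real \<Rightarrow> ('a \<Rightarrow> real) \<Rightarrow> 'a \<Rightarrow> real" where
  "mlap mu m u x = (1 / vmeasure mu x) *
     (\<Sum>y\<in>{y. adj mu x y}. mu x y * \<bar>u y - u x\<bar> powr (m - 2) * (u y - u x))"

definition grad :: "('a \<Rightarrow> 'a \<Rightarrow> real) \<Rightarrow> ('a \<Rightarrow> real) \<Rightarrow> 'a \<Rightarrow> real" where
  "grad mu u x = sqrt (\<Sum>y\<in>{y. adj mu x y}. mu x y / (2 * vmeasure mu x) * (u y - u x)\<^sup>2)"

text \<open>Inequality Delta_m u + u^p |grad u|^q <= 0 at x, with conventions
  0^0 = 1, 0^q = 0 for q > 0, and failure when q < 0 and |grad u(x)| = 0.\<close>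
definition ineq_at :: "('a \<Rightarrow> 'a \<Rightarrow> real) \<Rightarrow> real \<Rightarrow> real \<Rightarrow> real \<Rightarrow> ('a \<Rightarrow> real) \<Rightarrow> 'a \<Rightarrow> bool" where
  "ineq_at mu m p q u x \<longleftrightarrow>
     (if grad mu u x = 0 then
        (if q < 0 then False
         else if q = 0 then mlap mu m u x + u x powr p \<le> 0
         else mlap mu m u x \<le> 0)
      else mlap mu m u x + u x powr p * grad mu u x powr q \<le> 0)"

definition nontrivial_pos_solution ::
  "('a \<Rightarrow> 'a \<Rightarrow> real) \<Rightarrow> real \<Rightarrow> real \<Rightarrow> real \<Rightarrow> ('a \<Rightarrow> real) \<Rightarrow> bool" where
  "nontrivial_pos_solution mu m p q u \<longleftrightarrow>
     (\<forall>x. u x > 0) \<and> (\<exists>x y. u x \<noteq> u y) \<and> (\<forall>x. ineq_at mu m p q u x)"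

end

theory Submission
  imports Defs
begin

definition phi :: "real \<Rightarrow> real \<Rightarrow> real" where
  "phi m s = \<bar>s\<bar> powr (m - 2) * s"

lemma phi_nonneg: assumes "m > 1" "s \<ge> 0" shows "phi m s = s powr (m - 1)"
proof (cases "s = 0")
  case True then show ?thesis by (simp add: phi_def)
next
  case False
  then have "s > 0" using assms by simp
  then have "s powr (m - 1) = s powr ((m - 2) + 1)" by simp
  also have "\<dots> = s powr (m - 2) * s powr 1" by (rule powr_add)
  finally have "s powr (m - 1) = s powr (m - 2) * s powr 1" .
  then show ?thesis using \<open>s > 0\<close> by (simp add: phi_def)
qed

lemma phi_nonpos: assumes "m > 1" "s \<le> 0" shows "phi m s = - ((- s) powr (m - 1))"
proof -
  have "phi m (-s) = (-s) powr (m - 1)" using phi_nonneg assms by simp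
  moreover have "phi m (-s) = - phi m s" by (simp add: phi_def)
  ultimately show ?thesis by simp
qed

definition gg :: "real \<Rightarrow> real \<Rightarrow> real \<Rightarrow> real" where
  "gg m a b = phi m (b / a - 1) + phi m (a / b - 1)"

lemma gg_sym: "gg m a b = gg m b a" by (simp add: gg_def)

lemma gg_nonneg_aux: assumes "m > 1" "0 < a" "a \<le> b" shows "gg m a b \<ge> 0"
proof -
  have X: "b / a - 1 \<ge> 0" using assms by (simp add: field_simps)
  have Y: "a / b - 1 \<le> 0" using assms by (simp add: field_simps)
  have "1 - a / b \<le> b / a - 1"
  proof -
    have "1 - a/b = (b - a)/b" using assms by (simp add: field_simps)
    also have "\<dots> \<le> (b - a)/a" using assms by (intro divide_left_mono) auto
    also have "\<dots> = b/a - 1" using assms by (simp add: field_simps)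
    finally show ?thesis .
  qed
  then have "(1 - a/b) powr (m - 1) \<le> (b/a - 1) powr (m - 1)"
    using assms by (intro powr_mono2) (auto simp: field_simps)
  then show ?thesis unfolding gg_def using phi_nonneg[OF assms(1) X] phi_nonpos[OF assms(1) Y] by simp
qed

lemma gg_nonneg: assumes "m > 1" "0 < a" "0 < b" shows "gg m a b \<ge> 0"
  using gg_nonneg_aux[OF assms(1,2)] gg_nonneg_aux[OF assms(1,3)] gg_sym
  by (metis linear)

lemma gg_big_aux: assumes "m > 1" "0 < a" "2 * a \<le> b" shows "gg m a b \<ge> 1 - 2 powr (1 - m)"
proof -
  define X where "X = b / a - 1"
  have X1: "X \<ge> 1" using assms by (simp add: X_def field_simps)
  have Y: "a / b - 1 \<le> 0" using assms by (simp add: field_simps)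
  have YX: "1 - a / b = X * (a / b)" using assms by (simp add: X_def field_simps)
  have ab: "a / b \<le> 1/2" using assms by (simp add: field_simps)
  have "1 - a/b \<le> X * (1/2)" unfolding YX using ab X1 by (intro mult_left_mono) auto
  then have le: "(1 - a/b) powr (m - 1) \<le> (X * (1/2)) powr (m - 1)"
    using assms by (intro powr_mono2) (auto simp: field_simps)
  have "(X * (1/2)) powr (m - 1) = X powr (m - 1) * 2 powr (1 - m)"
    using X1 by (simp add: powr_mult powr_divide powr_minus_divide[symmetric] powr_diff)
  then have le2: "(1 - a/b) powr (m - 1) \<le> X powr (m - 1) * 2 powr (1 - m)" using le by simp
  have "gg m a b = X powr (m - 1) - (1 - a/b) powr (m - 1)"
    unfolding gg_def using phi_nonneg[OF assms(1), of X] phi_nonpos[OF assms(1) Y] X1 X_def by simp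
  also have "\<dots> \<ge> X powr (m - 1) * (1 - 2 powr (1 - m))" using le2 by (simp add: algebra_simps)
  finally have g1: "gg m a b \<ge> X powr (m - 1) * (1 - 2 powr (1 - m))" .
  have "2 powr (1 - m) < 1" using assms by (simp add: powr_less_one)
  moreover have "X powr (m - 1) \<ge> 1" using X1 assms by (simp add: ge_one_powr_ge_zero)
  ultimately have "X powr (m - 1) * (1 - 2 powr (1 - m)) \<ge> 1 - 2 powr (1 - m)"
    by (simp add: mult_le_cancel_right1)
  with g1 show ?thesis by simp
qed

lemma wg_fin: "weighted_graph mu \<Longrightarrow> finite {y. adj mu x y}"
  by (simp add: weighted_graph_def)
lemma wg_conn: "weighted_graph mu \<Longrightarrow> (adj mu)\<^sup>*\<^sup>* x y"
  by (simp add: weighted_graph_def)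
lemma wg_sym: "weighted_graph mu \<Longrightarrow> adj mu x y = adj mu y x"
  by (simp add: weighted_graph_def adj_def)
lemma wg_symmu: "weighted_graph mu \<Longrightarrow> mu x y = mu y x"
  by (simp add: weighted_graph_def)
lemma wg_nonneg: "weighted_graph mu \<Longrightarrow> mu x y \<ge> 0"
  by (simp add: weighted_graph_def)

lemma gd_ex: assumes "weighted_graph mu" shows "(adj mu ^^ gdist mu v0 x) v0 x"
proof -
  have "\<exists>n. (adj mu ^^ n) v0 x" using wg_conn[OF assms] rtranclp_power by metis
  then show ?thesis unfolding gdist_def by (rule LeastI_ex)
qed

lemma gd_le: "(adj mu ^^ n) v0 x \<Longrightarrow> gdist mu v0 x \<le> n"
  unfolding gdist_def by (rule Least_le)

lemma gd_adj: assumes "weighted_graph mu" "adj mu x y" shows "gdist mu v0 y \<le> Suc (gdist mu v0 x)"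
  by (rule gd_le[OF relpowp_Suc_I[OF gd_ex[OF assms(1), of v0 x] assms(2)]])

lemma ball_fin: assumes "weighted_graph mu" shows "finite (ball mu v0 n)"
proof (induction n)
  case 0
  have "ball mu v0 0 \<subseteq> {v0}"
  proof
    fix x assume "x \<in> ball mu v0 0"
    then have "gdist mu v0 x = 0" by (simp add: ball_def)
    then show "x \<in> {v0}" using gd_ex[OF assms, of v0 x] by simp
  qed
  then show ?case using finite_subset by blast
next
  case (Suc n)
  have "ball mu v0 (Suc n) \<subseteq> ball mu v0 n \<union> (\<Union>x\<in>ball mu v0 n. {y. adj mu x y})"
  proof
    fix y assume y: "y \<in> ball mu v0 (Suc n)"
    show "y \<in> ball mu v0 n \<union> (\<Union>x\<in>ball mu v0 n. {y. adj mu x y})"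
    proof (cases "gdist mu v0 y \<le> n")
      case True then show ?thesis by (simp add: ball_def)
    next
      case False
      then have e: "gdist mu v0 y = Suc n" using y by (simp add: ball_def)
      have "(adj mu ^^ Suc n) v0 y" using gd_ex[OF assms, of v0 y] e by simp
      then obtain z where z: "(adj mu ^^ n) v0 z" "adj mu z y" by (rule relpowp_Suc_E)
      then have "z \<in> ball mu v0 n" using gd_le by (simp add: ball_def)
      then show ?thesis using z by blast
    qed
  qed
  moreover have "finite (ball mu v0 n \<union> (\<Union>x\<in>ball mu v0 n. {y. adj mu x y}))"
    using Suc wg_fin[OF assms] by blast
  ultimately show ?case using finite_subset by blast
qed

lemma ball_mono: "n \<le> k \<Longrightarrow> ball mu v0 n \<subseteq> ball mu v0 k"
  by (auto simp: ball_def)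

lemma nb_in_ball: assumes "weighted_graph mu" "x \<in> ball mu v0 n" "adj mu x y"
  shows "y \<in> ball mu v0 (Suc n)"
  using gd_adj[OF assms(1,3), of v0] assms(2) by (simp add: ball_def)

locale sol =
  fixes mu :: "'a \<Rightarrow> 'a \<Rightarrow> real" and m p q p0 :: real and u :: "'a \<Rightarrow> real"
  assumes wg: "weighted_graph mu" and cp: "cond_p0 mu p0" and m1: "m > 1"
    and cs: "(p + q = m - 1 \<and> p \<ge> 0 \<and> q > 0) \<or> (p + q = m - 1 \<and> q < 0 \<and> m < 3)"
    and upos: "\<And>x. u x > 0" and ineq: "\<And>x. ineq_at mu m p q u x"
begin

definition "nb x = {y. adj mu x y}"
definition "vm x = vmeasure mu x"
definition "D x = (\<Sum>y\<in>nb x. mu x y * phi m (u y / u x - 1))"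
definition "hh x = (if grad mu u x = 0 then 0 else (grad mu u x / u x) powr q)"
definition "pz x y = (max 0 (1 - u y / u x)) powr (m - 1)"

lemma fin_nb: "finite (nb x)" using wg_fin[OF wg] by (simp add: nb_def)
lemma adj_pos: "y \<in> nb x \<Longrightarrow> mu x y > 0" by (simp add: nb_def adj_def)
lemma mu_nn: "mu x y \<ge> 0" using wg_nonneg[OF wg] .
lemma vm_eq: "vm x = (\<Sum>y\<in>nb x. mu x y)" by (simp add: vm_def vmeasure_def nb_def)
lemma vm_nn: "vm x \<ge> 0" unfolding vm_eq by (rule sum_nonneg) (simp add: mu_nn)
lemma vm_pos: "nb x \<noteq> {} \<Longrightarrow> vm x > 0"
  unfolding vm_eq using fin_nb adj_pos by (intro sum_pos) auto
lemma mu_le_vm: "y \<in> nb x \<Longrightarrow> mu x y \<le> vm x"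
  unfolding vm_eq using fin_nb mu_nn by (intro member_le_sum) auto
lemma vm_le: assumes "y \<in> nb x" shows "vm x \<le> p0 * mu x y"
proof -
  have "mu x y / vm x \<ge> 1 / p0" using cp assms by (simp add: cond_p0_def nb_def vm_def)
  moreover have "vm x > 0" using vm_pos assms by auto
  moreover have "p0 > 1" using cp by (simp add: cond_p0_def)
  ultimately show ?thesis by (simp add: field_simps)
qed

lemma term_eq: "mu x y * (\<bar>u y - u x\<bar> powr (m - 2) * (u y - u x))
   = u x powr (m - 1) * (mu x y * phi m (u y / u x - 1))"
proof -
  have a: "u x > 0" by (rule upos)
  have e1: "\<bar>u y - u x\<bar> = u x * \<bar>u y / u x - 1\<bar>" using a by (simp add: field_simps abs_mult)
  have e2: "u y - u x = u x * (u y / u x - 1)" using a by (simp add: field_simps)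
  have e3: "u x powr (m - 2) * u x = u x powr (m - 1)"
  proof -
    have "u x powr (m - 1) = u x powr ((m - 2) + 1)" by simp
    also have "\<dots> = u x powr (m - 2) * u x powr 1" by (rule powr_add)
    finally show ?thesis using a by simp
  qed
  have e1': "\<bar>u y - u x\<bar> powr (m - 2) = u x powr (m - 2) * \<bar>u y / u x - 1\<bar> powr (m - 2)"
    unfolding e1 by (rule powr_mult)
  show ?thesis unfolding e1' phi_def e3[symmetric] by (subst e2) (simp add: ac_simps)
qed

lemma D_eq: "D x = u x powr (1 - m) * (vm x * mlap mu m u x)"
proof -
  define S where "S = (\<Sum>y\<in>nb x. mu x y * (\<bar>u y - u x\<bar> powr (m - 2) * (u y - u x)))"
  have "vm x * mlap mu m u x = S"
  proof (cases "nb x = {}")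
    case True then show ?thesis by (simp add: S_def mlap_def nb_def)
  next
    case False then have "vm x > 0" by (rule vm_pos)
    then show ?thesis by (simp add: S_def mlap_def nb_def vm_def mult.assoc)
  qed
  moreover have "S = u x powr (m - 1) * D x"
    unfolding S_def D_def term_eq by (simp add: sum_distrib_left)
  moreover have "u x powr (1 - m) * u x powr (m - 1) = 1"
    using upos[of x] by (simp add: powr_add[symmetric])
  ultimately show ?thesis by (metis mult.assoc mult_1)
qed

lemma vert: "D x + vm x * hh x \<le> 0"
proof -
  have a: "u x > 0" by (rule upos)
  have c: "u x powr (1 - m) > 0" using a by simp
  have qne: "q \<noteq> 0" using cs by auto
  show ?thesis
  proof (cases "grad mu u x = 0")
    case True
    then have "q > 0" "mlap mu m u x \<le> 0" using ineq[of x] qne by (auto simp: ineq_at_def split: if_splits)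
    then have "D x \<le> 0" unfolding D_eq using c vm_nn
      by (simp add: mult_le_0_iff)
    then show ?thesis using True by (simp add: hh_def)
  next
    case False
    then have i: "mlap mu m u x + u x powr p * grad mu u x powr q \<le> 0" using ineq[of x] by (simp add: ineq_at_def)
    have "u x powr (1 - m) * (u x powr p * grad mu u x powr q) = (grad mu u x / u x) powr q"
    proof -
      have pq: "1 - m + p = - q" using cs by auto
      have "u x powr (1 - m) * u x powr p = u x powr (- q)" by (simp add: powr_add[symmetric] pq)
      then have "u x powr (1 - m) * (u x powr p * grad mu u x powr q) = grad mu u x powr q * u x powr (- q)"
        by (simp add: ac_simps)
      also have "\<dots> = (grad mu u x / u x) powr q" by (simp add: powr_divide powr_minus divide_inverse[symmetric])
      finally show ?thesis .
    qed
    then have "u x powr (1 - m) * (mlap mu m u x + u x powr p * grad mu u x powr q) = u x powr (1 - m) * mlap mu m u x + hh x"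
      using False by (simp add: hh_def distrib_left)
    moreover have "u x powr (1 - m) * (mlap mu m u x + u x powr p * grad mu u x powr q) \<le> 0"
      using i c by (simp add: mult_le_0_iff)
    ultimately have "u x powr (1 - m) * mlap mu m u x + hh x \<le> 0" by simp
    then have "vm x * (u x powr (1 - m) * mlap mu m u x + hh x) \<le> 0" using vm_nn by (simp add: mult_le_0_iff)
    then show ?thesis unfolding D_eq by (simp add: algebra_simps)
  qed
qed

end

context sol begin

definition "gv x y = gg m (u x) (u y)"
definition "c0 = 1 - 2 powr (1 - m)"
definition "KK = p0 / c0 + (2 * p0) powr (q / 2) + 1"

lemma sq_powr: fixes t r :: real assumes "t \<ge> 0" shows "(t\<^sup>2) powr (r / 2) = t powr r"
proof -
  have "t\<^sup>2 = t powr 2" using assms by simp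
  then have "(t\<^sup>2) powr (r / 2) = t powr (2 * (r / 2))" by (simp add: powr_powr)
  then show ?thesis by simp
qed

lemma p0gt: "p0 > 1" using cp by (simp add: cond_p0_def)
lemma c0pos: "c0 > 0" using m1 by (simp add: c0_def powr_less_one)
lemma KK_pos: "KK \<ge> 1" unfolding KK_def using c0pos p0gt by (simp add: add_nonneg_nonneg)
lemma hh_nn: "hh x \<ge> 0" by (simp add: hh_def)
lemma gv_nn: "gv x y \<ge> 0" unfolding gv_def using gg_nonneg[OF m1 upos upos] .
lemma gv_sym: "gv x y = gv y x" unfolding gv_def by (rule gg_sym)
lemma pz_nn: "pz x y \<ge> 0" by (simp add: pz_def)
lemma pz_le1: "pz x y \<le> 1"
proof -
  have "u y / u x > 0" using upos[of x] upos[of y] by simp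
  then have "\<bar>max 0 (1 - u y / u x)\<bar> \<le> 1" by simp
  then show ?thesis unfolding pz_def using m1 by (intro powr_le1) auto
qed
lemma phi_ge: "phi m (u y / u x - 1) \<ge> - pz x y"
proof (cases "u y / u x - 1 \<ge> 0")
  case True
  then have "phi m (u y / u x - 1) \<ge> 0" using phi_nonneg[OF m1 True] by simp
  moreover have "pz x y = 0" using True by (simp add: pz_def)
  ultimately show ?thesis by simp
next
  case False
  then have "phi m (u y / u x - 1) = - ((1 - u y / u x) powr (m - 1))" using phi_nonpos[OF m1] by simp
  moreover have "pz x y = (1 - u y / u x) powr (m - 1)" using False by (simp add: pz_def)
  ultimately show ?thesis by simp
qed

lemma gv_big: assumes "u z \<ge> 2 * u x \<or> u x \<ge> 2 * u z" shows "gv x z \<ge> c0"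
  using assms gg_big_aux[OF m1 upos[of x], of "u z"] gg_big_aux[OF m1 upos[of z], of "u x"] gv_sym[of x z]
  unfolding gv_def c0_def by auto

lemma grad_sq: "(grad mu u x)\<^sup>2 = (\<Sum>y\<in>nb x. mu x y / (2 * vm x) * (u y - u x)\<^sup>2)"
proof -
  have "(\<Sum>y\<in>nb x. mu x y / (2 * vm x) * (u y - u x)\<^sup>2) \<ge> 0"
    using mu_nn vm_nn by (intro sum_nonneg) auto
  then show ?thesis unfolding grad_def by (simp add: nb_def vm_def)
qed

lemma grad_nn: "grad mu u x \<ge> 0"
  unfolding grad_def using mu_nn vm_nn by (auto intro!: sum_nonneg simp: vm_def)

lemma L_le_vm: "(\<Sum>y\<in>nb x. mu x y * pz x y) \<le> vm x"
  unfolding vm_eq using pz_le1 mu_nn by (intro sum_mono) (simp add: mult_left_le)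

lemma local_bound:
  "(\<Sum>y\<in>nb x. mu x y * pz x y) \<le> KK * (vm x * hh x + (\<Sum>y\<in>nb x. mu x y * gv x y))"
proof -
  have G: "0 \<le> (\<Sum>y\<in>nb x. mu x y * gv x y)" using mu_nn gv_nn by (intro sum_nonneg) auto
  have H: "0 \<le> vm x * hh x" using vm_nn hh_nn by simp
  show ?thesis
  proof (cases "\<exists>z\<in>nb x. u z \<ge> 2 * u x \<or> u x \<ge> 2 * u z")
    case True
    then obtain z where z: "z \<in> nb x" "u z \<ge> 2 * u x \<or> u x \<ge> 2 * u z" by blast
    have "(\<Sum>y\<in>nb x. mu x y * pz x y) \<le> vm x" by (rule L_le_vm)
    also have "\<dots> \<le> p0 * mu x z" using vm_le[OF z(1)] .
    also have "\<dots> \<le> p0 * (mu x z * (gv x z / c0))"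
    proof -
      have "gv x z / c0 \<ge> 1" using gv_big[OF z(2)] c0pos by simp
      then have "mu x z * 1 \<le> mu x z * (gv x z / c0)" using mu_nn[of x z] by (intro mult_left_mono) auto
      then show ?thesis using p0gt by (intro mult_left_mono) auto
    qed
    also have "\<dots> = (p0 / c0) * (mu x z * gv x z)" by simp
    also have "\<dots> \<le> (p0 / c0) * (\<Sum>y\<in>nb x. mu x y * gv x y)"
      using z(1) fin_nb mu_nn gv_nn p0gt c0pos
      by (intro mult_left_mono member_le_sum) auto
    also have "\<dots> \<le> KK * (vm x * hh x + (\<Sum>y\<in>nb x. mu x y * gv x y))"
    proof -
      have "p0 / c0 \<le> KK" unfolding KK_def by simp
      then have "(p0 / c0) * (\<Sum>y\<in>nb x. mu x y * gv x y) \<le> KK * (\<Sum>y\<in>nb x. mu x y * gv x y)"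
        using G by (intro mult_right_mono) auto
      also have "\<dots> \<le> KK * (vm x * hh x + (\<Sum>y\<in>nb x. mu x y * gv x y))"
        using H KK_pos by (intro mult_left_mono) auto
      finally show ?thesis .
    qed
    finally show ?thesis .
  next
    case False
    then have small: "\<And>y. y \<in> nb x \<Longrightarrow> u y < 2 * u x" by force
    show ?thesis
    proof (cases "q < 0")
      case True
      have gne: "grad mu u x \<noteq> 0" using ineq[of x] True by (auto simp: ineq_at_def)
      have "(grad mu u x)\<^sup>2 \<le> (\<Sum>y\<in>nb x. mu x y / (2 * vm x) * (u x)\<^sup>2)"
        unfolding grad_sq
      proof (intro sum_mono mult_left_mono)
        fix y assume "y \<in> nb x"
        then have "\<bar>u y - u x\<bar> \<le> \<bar>u x\<bar>" using small[of y] upos[of y] upos[of x] by auto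
        then show "(u y - u x)\<^sup>2 \<le> (u x)\<^sup>2" by (simp add: abs_le_square_iff)
        show "0 \<le> mu x y / (2 * vm x)" using mu_nn vm_nn by simp
      qed
      also have "\<dots> = (u x)\<^sup>2 * ((\<Sum>y\<in>nb x. mu x y) / (2 * vm x))"
        by (simp add: sum_distrib_left sum_divide_distrib ac_simps)
      also have "\<dots> \<le> (u x)\<^sup>2"
      proof -
        have "(\<Sum>y\<in>nb x. mu x y) / (2 * vm x) \<le> 1" unfolding vm_eq[symmetric] using vm_nn
          by (cases "vm x = 0") auto
        then show ?thesis by (rule mult_left_le) simp
      qed
      finally have "(grad mu u x)\<^sup>2 \<le> (u x)\<^sup>2" .
      moreover have "grad mu u x \<ge> 0" by (rule grad_nn)
      ultimately have gl: "grad mu u x \<le> u x" using upos[of x]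
        using power2_le_imp_le by fastforce
      have "grad mu u x > 0" using gne \<open>grad mu u x \<ge> 0\<close> by simp
      then have "(grad mu u x / u x) powr q \<ge> 1 powr q" using gl upos[of x] True
        by (intro powr_mono2') (auto simp: field_simps)
      then have "hh x \<ge> 1" using gne by (simp add: hh_def)
      then have "vm x * 1 \<le> vm x * hh x" using vm_nn[of x] by (intro mult_left_mono) auto
      then have "vm x \<le> vm x * hh x" by simp
      also have "\<dots> \<le> KK * (vm x * hh x + (\<Sum>y\<in>nb x. mu x y * gv x y))"
        using G H KK_pos
        by (smt (verit, best) mult_le_cancel_right1 mult_nonneg_nonneg)
      finally show ?thesis using L_le_vm[of x] by simp
    next
      case False
      then have q0: "q > 0" "q \<le> m - 1" using cs by auto
      have each: "pz x y \<le> (2 * p0) powr (q / 2) * hh x" if y: "y \<in> nb x" for y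
      proof (cases "u y \<ge> u x")
        case True
        then have "pz x y = 0" using upos[of x] by (simp add: pz_def field_simps)
        then show ?thesis using hh_nn p0gt by simp
      next
        case False
        define t where "t = 1 - u y / u x"
        have t0: "0 < t" "t < 1" using False upos[of x] upos[of y] by (auto simp: t_def field_simps)
        have "pz x y = t powr (m - 1)" using t0 by (simp add: pz_def t_def)
        also have "\<dots> \<le> t powr q" using t0 q0 by (intro powr_mono') auto
        finally have p1: "pz x y \<le> t powr q" .
        have "mu x y / vm x \<ge> 1 / p0" using cp y by (simp add: cond_p0_def nb_def vm_def)
        have "(grad mu u x)\<^sup>2 \<ge> mu x y / (2 * vm x) * (u y - u x)\<^sup>2"
          unfolding grad_sq using y fin_nb mu_nn vm_nn
          by (intro member_le_sum[of y "nb x" "\<lambda>y. mu x y / (2 * vm x) * (u y - u x)\<^sup>2"]) auto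
        moreover have "mu x y / (2 * vm x) * (u y - u x)\<^sup>2 \<ge> (u y - u x)\<^sup>2 / (2 * p0)"
        proof -
          have "mu x y / (2 * vm x) \<ge> 1 / (2 * p0)" using \<open>mu x y / vm x \<ge> 1 / p0\<close> by simp
          then show ?thesis by (metis divide_inverse mult.commute mult_1 mult_right_mono zero_le_power2)
        qed
        moreover have "(u y - u x)\<^sup>2 = (u x)\<^sup>2 * t\<^sup>2" using upos[of x] by (simp add: t_def field_simps power2_eq_square)
        ultimately have gsq: "(u x)\<^sup>2 * t\<^sup>2 / (2 * p0) \<le> (grad mu u x)\<^sup>2" by simp
        moreover have "(u x)\<^sup>2 * t\<^sup>2 / (2 * p0) > 0" using t0 upos[of x] p0gt by simp
        ultimately have gpos: "grad mu u x \<noteq> 0" by auto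
        have t2: "t\<^sup>2 \<le> 2 * p0 * (grad mu u x / u x)\<^sup>2"
          using gsq upos[of x] p0gt by (simp add: field_simps power_divide)
        have "t powr q = (t\<^sup>2) powr (q / 2)" using t0 sq_powr[of t q] by simp
        also have "\<dots> \<le> (2 * p0 * (grad mu u x / u x)\<^sup>2) powr (q / 2)"
          using t2 q0 by (intro powr_mono2) auto
        also have "\<dots> = (2 * p0) powr (q / 2) * ((grad mu u x / u x)\<^sup>2) powr (q / 2)" by (rule powr_mult)
        also have "((grad mu u x / u x)\<^sup>2) powr (q / 2) = (grad mu u x / u x) powr q"
        proof -
          have "grad mu u x \<ge> 0" by (rule grad_nn)
          then show ?thesis using upos[of x] sq_powr[of "grad mu u x / u x" q] by simp
        qed
        finally show ?thesis using p1 gpos by (simp add: hh_def)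
      qed
      have "(\<Sum>y\<in>nb x. mu x y * pz x y) \<le> (\<Sum>y\<in>nb x. mu x y * ((2 * p0) powr (q / 2) * hh x))"
        using each mu_nn by (intro sum_mono mult_left_mono) auto
      also have "\<dots> = (2 * p0) powr (q / 2) * (vm x * hh x)"
        by (simp only: vm_eq sum_distrib_right[symmetric]) (simp add: ac_simps)
      also have "\<dots> \<le> KK * (vm x * hh x)" unfolding KK_def using H c0pos p0gt
        by (intro mult_right_mono) auto
      also have "\<dots> \<le> KK * (vm x * hh x + (\<Sum>y\<in>nb x. mu x y * gv x y))"
        using G KK_pos by (intro mult_left_mono) auto
      finally show ?thesis .
    qed
  qed
qed

end

context sol begin

definition "AA B = (1/2) * (\<Sum>x\<in>B. \<Sum>y\<in>B. mu x y * gv x y) + (\<Sum>x\<in>B. vm x * hh x)"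
definition "Bd B = (\<Sum>x\<in>B. \<Sum>y\<in>nb x - B. mu x y * pz x y)"

lemma mu_zero: "y \<notin> nb x \<Longrightarrow> mu x y = 0"
  using mu_nn[of x y] by (simp add: nb_def adj_def)

lemma AA_le_Bd: assumes fB: "finite B" shows "AA B \<le> Bd B"
proof -
  define f where "f x y = mu x y * phi m (u y / u x - 1)" for x y
  have Dsplit: "D x = (\<Sum>y\<in>B. f x y) + (\<Sum>y\<in>nb x - B. f x y)" for x
  proof -
    have "D x = (\<Sum>y\<in>nb x \<inter> B. f x y) + (\<Sum>y\<in>nb x - B. f x y)"
      unfolding D_def f_def using sum.Int_Diff[OF fin_nb] by blast
    moreover have "(\<Sum>y\<in>nb x \<inter> B. f x y) = (\<Sum>y\<in>B. f x y)"
      using fB by (intro sum.mono_neutral_left) (auto simp: f_def intro: mu_zero)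
    ultimately show ?thesis by simp
  qed
  have sw: "(\<Sum>x\<in>B. \<Sum>y\<in>B. f x y) = (\<Sum>x\<in>B. \<Sum>y\<in>B. f y x)" by (rule sum.swap)
  have "2 * (\<Sum>x\<in>B. \<Sum>y\<in>B. f x y) = (\<Sum>x\<in>B. \<Sum>y\<in>B. f x y + f y x)"
    using sw by (simp add: sum.distrib)
  also have "\<dots> = (\<Sum>x\<in>B. \<Sum>y\<in>B. mu x y * gv x y)"
    by (intro sum.cong refl) (simp add: f_def gv_def gg_def wg_symmu[OF wg] distrib_left)
  finally have I: "(\<Sum>x\<in>B. \<Sum>y\<in>B. f x y) = (1/2) * (\<Sum>x\<in>B. \<Sum>y\<in>B. mu x y * gv x y)" by simp
  have O: "(\<Sum>x\<in>B. \<Sum>y\<in>nb x - B. f x y) \<ge> - Bd B"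
  proof -
    have "(\<Sum>x\<in>B. \<Sum>y\<in>nb x - B. f x y) \<ge> (\<Sum>x\<in>B. \<Sum>y\<in>nb x - B. - (mu x y * pz x y))"
      unfolding f_def
    proof (intro sum_mono)
      fix x y
      have "mu x y * (- pz x y) \<le> mu x y * phi m (u y / u x - 1)"
        using phi_ge mu_nn by (intro mult_left_mono) auto
      then show "- (mu x y * pz x y) \<le> mu x y * phi m (u y / u x - 1)" by simp
    qed
    then show ?thesis by (simp add: Bd_def sum_negf)
  qed
  have V: "(\<Sum>x\<in>B. D x + vm x * hh x) \<le> 0" using vert by (intro sum_nonpos) auto
  have "(\<Sum>x\<in>B. D x) = (\<Sum>x\<in>B. \<Sum>y\<in>B. f x y) + (\<Sum>x\<in>B. \<Sum>y\<in>nb x - B. f x y)"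
    by (simp add: Dsplit sum.distrib)
  then show ?thesis using V O I unfolding AA_def by (simp add: sum.distrib)
qed

lemma inner_nn: "0 \<le> (\<Sum>y\<in>C. mu x y * gv x y)" using mu_nn gv_nn by (intro sum_nonneg) auto

lemma AA_mono: assumes "finite C" "B \<subseteq> C" shows "AA B \<le> AA C"
proof -
  have fB: "finite B" using assms finite_subset by blast
  have "(\<Sum>x\<in>B. \<Sum>y\<in>B. mu x y * gv x y) \<le> (\<Sum>x\<in>B. \<Sum>y\<in>C. mu x y * gv x y)"
    using assms mu_nn gv_nn by (intro sum_mono sum_mono2) auto
  also have "\<dots> \<le> (\<Sum>x\<in>C. \<Sum>y\<in>C. mu x y * gv x y)"
    using assms inner_nn by (intro sum_mono2) auto
  finally have 1: "(\<Sum>x\<in>B. \<Sum>y\<in>B. mu x y * gv x y) \<le> (\<Sum>x\<in>C. \<Sum>y\<in>C. mu x y * gv x y)" .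
  have 2: "(\<Sum>x\<in>B. vm x * hh x) \<le> (\<Sum>x\<in>C. vm x * hh x)"
    using assms vm_nn hh_nn by (intro sum_mono2) auto
  show ?thesis using 1 2 unfolding AA_def by simp
qed

end

context sol begin

lemma nb_sub: "x \<in> ball mu v0 n \<Longrightarrow> nb x \<subseteq> ball mu v0 (Suc n)"
  using nb_in_ball[OF wg] by (auto simp: nb_def)

lemma Bd_le: "Bd (ball mu v0 (Suc n)) \<le> (\<Sum>x\<in>ball mu v0 (Suc n) - ball mu v0 n. \<Sum>y\<in>nb x. mu x y * pz x y)"
proof -
  let ?B0 = "ball mu v0 n" and ?B1 = "ball mu v0 (Suc n)"
  have fB1: "finite ?B1" by (rule ball_fin[OF wg])
  have sub: "?B0 \<subseteq> ?B1" by (rule ball_mono) simp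
  have z: "(\<Sum>y\<in>nb x - ?B1. mu x y * pz x y) = 0" if "x \<in> ?B0" for x
  proof -
    have "nb x - ?B1 = {}" using nb_sub[OF that] by blast
    then show ?thesis by (simp only: sum.empty)
  qed
  have e1: "Bd ?B1 = (\<Sum>x\<in>?B1 \<inter> ?B0. \<Sum>y\<in>nb x - ?B1. mu x y * pz x y) + (\<Sum>x\<in>?B1 - ?B0. \<Sum>y\<in>nb x - ?B1. mu x y * pz x y)"
    unfolding Bd_def by (rule sum.Int_Diff[OF fB1, where B = "?B0"])
  have e2: "(\<Sum>x\<in>?B1 \<inter> ?B0. \<Sum>y\<in>nb x - ?B1. mu x y * pz x y) = 0"
  proof (rule sum.neutral, intro ballI)
    fix x assume "x \<in> ?B1 \<inter> ?B0"
    then have "x \<in> ?B0" by (rule IntD2)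
    then show "(\<Sum>y\<in>nb x - ?B1. mu x y * pz x y) = 0" by (rule z)
  qed
  have e3: "(\<Sum>x\<in>?B1 - ?B0. \<Sum>y\<in>nb x - ?B1. mu x y * pz x y) \<le> (\<Sum>x\<in>?B1 - ?B0. \<Sum>y\<in>nb x. mu x y * pz x y)"
  proof (rule sum_mono)
    fix x
    show "(\<Sum>y\<in>nb x - ?B1. mu x y * pz x y) \<le> (\<Sum>y\<in>nb x. mu x y * pz x y)"
      by (rule sum_mono2[OF fin_nb Diff_subset]) (simp add: mu_nn pz_nn)
  qed
  show ?thesis using e1 e2 e3 by linarith
qed

lemma AA_step: "AA (ball mu v0 (Suc (Suc n))) - AA (ball mu v0 n)
   \<ge> (1/2) * (\<Sum>x\<in>ball mu v0 (Suc n) - ball mu v0 n. vm x * hh x + (\<Sum>y\<in>nb x. mu x y * gv x y))"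
proof -
  let ?B0 = "ball mu v0 n" and ?B1 = "ball mu v0 (Suc n)" and ?B2 = "ball mu v0 (Suc (Suc n))"
  let ?R = "?B1 - ?B0"
  have f2: "finite ?B2" "finite ?B0" "finite ?R" using ball_fin[OF wg] by auto
  have s01: "?B0 \<subseteq> ?B1" "?B1 \<subseteq> ?B2" "?B0 \<subseteq> ?B2" by (auto simp: ball_def)
  have dj: "?B0 \<inter> ?R = {}" by auto
  have un: "?B0 \<union> ?R \<subseteq> ?B2" using s01 by auto
  define F where "F x = (\<Sum>y\<in>?B2. mu x y * gv x y)" for x
  have "(\<Sum>x\<in>?B2. F x) \<ge> (\<Sum>x\<in>?B0 \<union> ?R. F x)"
    using f2 un inner_nn by (intro sum_mono2) (auto simp: F_def)
  also have "(\<Sum>x\<in>?B0 \<union> ?R. F x) = (\<Sum>x\<in>?B0. F x) + (\<Sum>x\<in>?R. F x)"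
    using f2 dj by (intro sum.union_disjoint) auto
  finally have 1: "(\<Sum>x\<in>?B2. F x) \<ge> (\<Sum>x\<in>?B0. F x) + (\<Sum>x\<in>?R. F x)" .
  have 2: "(\<Sum>x\<in>?B0. F x) \<ge> (\<Sum>x\<in>?B0. \<Sum>y\<in>?B0. mu x y * gv x y)"
    unfolding F_def using f2 s01 mu_nn gv_nn by (intro sum_mono sum_mono2) auto
  have 3: "(\<Sum>x\<in>?R. F x) \<ge> (\<Sum>x\<in>?R. \<Sum>y\<in>nb x. mu x y * gv x y)"
    unfolding F_def using f2 mu_nn gv_nn nb_sub by (intro sum_mono sum_mono2) auto
  have 4: "(\<Sum>x\<in>?B2. vm x * hh x) \<ge> (\<Sum>x\<in>?B0. vm x * hh x) + (\<Sum>x\<in>?R. vm x * hh x)"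
  proof -
    have "(\<Sum>x\<in>?B2. vm x * hh x) \<ge> (\<Sum>x\<in>?B0 \<union> ?R. vm x * hh x)"
      using f2 un vm_nn hh_nn by (intro sum_mono2) auto
    also have "(\<Sum>x\<in>?B0 \<union> ?R. vm x * hh x) = (\<Sum>x\<in>?B0. vm x * hh x) + (\<Sum>x\<in>?R. vm x * hh x)"
      using f2 dj by (intro sum.union_disjoint) auto
    finally show ?thesis .
  qed
  have 5: "(\<Sum>x\<in>?R. vm x * hh x) \<ge> 0" using vm_nn hh_nn by (intro sum_nonneg) auto
  have "AA ?B2 - AA ?B0 \<ge> (1/2) * (\<Sum>x\<in>?R. \<Sum>y\<in>nb x. mu x y * gv x y) + (\<Sum>x\<in>?R. vm x * hh x)"
    using 1 2 3 4 unfolding AA_def F_def by simp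
  moreover have "(1/2) * (\<Sum>x\<in>?R. vm x * hh x + (\<Sum>y\<in>nb x. mu x y * gv x y))
     = (1/2) * (\<Sum>x\<in>?R. \<Sum>y\<in>nb x. mu x y * gv x y) + (1/2) * (\<Sum>x\<in>?R. vm x * hh x)"
    by (simp add: sum.distrib algebra_simps)
  ultimately show ?thesis using 5 by simp
qed

lemma AA_rec: "AA (ball mu v0 (Suc n)) \<le> 2 * KK * (AA (ball mu v0 (Suc (Suc n))) - AA (ball mu v0 n))"
proof -
  let ?R = "ball mu v0 (Suc n) - ball mu v0 n"
  have "AA (ball mu v0 (Suc n)) \<le> Bd (ball mu v0 (Suc n))" by (rule AA_le_Bd[OF ball_fin[OF wg]])
  also have "\<dots> \<le> (\<Sum>x\<in>?R. \<Sum>y\<in>nb x. mu x y * pz x y)" by (rule Bd_le)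
  also have "\<dots> \<le> (\<Sum>x\<in>?R. KK * (vm x * hh x + (\<Sum>y\<in>nb x. mu x y * gv x y)))"
    by (intro sum_mono local_bound)
  also have "\<dots> = 2 * KK * ((1/2) * (\<Sum>x\<in>?R. vm x * hh x + (\<Sum>y\<in>nb x. mu x y * gv x y)))"
    by (simp add: sum_distrib_left)
  also have "\<dots> \<le> 2 * KK * (AA (ball mu v0 (Suc (Suc n))) - AA (ball mu v0 n))"
    using AA_step KK_pos by (intro mult_left_mono) auto
  finally show ?thesis .
qed

lemma AA_le_W: "AA (ball mu v0 n) \<le> W mu v0 n"
proof -
  let ?B = "ball mu v0 n"
  let ?S = "{(x,y). x \<in> ?B \<and> adj mu x y \<and> gdist mu v0 x < gdist mu v0 y}"
  have fB: "finite ?B" by (rule ball_fin[OF wg])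
  have "AA ?B \<le> Bd ?B" by (rule AA_le_Bd[OF fB])
  also have "\<dots> \<le> (\<Sum>x\<in>?B. \<Sum>y\<in>nb x - ?B. mu x y)"
    unfolding Bd_def using pz_le1 mu_nn by (intro sum_mono) (simp add: mult_left_le)
  also have "\<dots> = (\<Sum>(x,y)\<in>(SIGMA x:?B. nb x - ?B). mu x y)"
    using fB fin_nb by (intro sum.Sigma) auto
  also have "\<dots> \<le> (\<Sum>(x,y)\<in>?S. mu x y)"
  proof (rule sum_mono2)
    have "?S \<subseteq> (SIGMA x:?B. nb x)" by (auto simp: nb_def)
    moreover have "finite (SIGMA x:?B. nb x)" using fB fin_nb by auto
    ultimately show "finite ?S" using finite_subset by blast
    show "(SIGMA x:?B. nb x - ?B) \<subseteq> ?S" by (auto simp: nb_def ball_def)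
    show "\<And>b. b \<in> ?S - (SIGMA x:?B. nb x - ?B) \<Longrightarrow> 0 \<le> (case b of (x, y) \<Rightarrow> mu x y)"
      using mu_nn by auto
  qed
  also have "\<dots> = W mu v0 n" by (simp add: W_def)
  finally show ?thesis .
qed

lemma exists_grad: "(\<exists>a b. u a \<noteq> u b) \<Longrightarrow> \<exists>x. grad mu u x \<noteq> 0"
proof -
  assume "\<exists>a b. u a \<noteq> u b"
  then obtain a b where ab: "u a \<noteq> u b" by blast
  have "\<exists>x y. adj mu x y \<and> u x \<noteq> u y"
  proof (rule ccontr)
    assume "\<not> ?thesis"
    then have c: "\<And>x y. adj mu x y \<Longrightarrow> u x = u y" by blast
    have "(adj mu)\<^sup>*\<^sup>* a b" by (rule wg_conn[OF wg])
    then have "u a = u b" by (induction rule: rtranclp_induct) (auto dest: c)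
    with ab show False by simp
  qed
  then obtain x y where xy: "adj mu x y" "u x \<noteq> u y" by blast
  have y: "y \<in> nb x" using xy by (simp add: nb_def)
  have "mu x y / (2 * vm x) * (u y - u x)\<^sup>2 > 0"
  proof -
    have "mu x y > 0" "vm x > 0" "(u y - u x)\<^sup>2 > 0" using adj_pos[OF y] vm_pos[of x] y xy(2) by auto
    then show ?thesis by simp
  qed
  also have "mu x y / (2 * vm x) * (u y - u x)\<^sup>2 \<le> (grad mu u x)\<^sup>2"
    unfolding grad_sq using y fin_nb mu_nn vm_nn
    by (intro member_le_sum[of y "nb x" "\<lambda>y. mu x y / (2 * vm x) * (u y - u x)\<^sup>2"]) auto
  finally show ?thesis by auto
qed

lemma AA_pos: assumes "grad mu u x0 \<noteq> 0" "n \<ge> gdist mu v0 x0" shows "AA (ball mu v0 n) > 0"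
proof -
  let ?B = "ball mu v0 n"
  have x0: "x0 \<in> ?B" using assms by (simp add: ball_def)
  have ne: "nb x0 \<noteq> {}"
  proof
    assume "nb x0 = {}"
    then have "(grad mu u x0)\<^sup>2 = 0" unfolding grad_sq by simp
    with assms show False by simp
  qed
  have "hh x0 > 0" using assms(1) grad_nn[of x0] upos[of x0] by (simp add: hh_def)
  then have p: "vm x0 * hh x0 > 0" using vm_pos[OF ne] by simp
  have "vm x0 * hh x0 \<le> (\<Sum>x\<in>?B. vm x * hh x)"
    using x0 ball_fin[OF wg] vm_nn hh_nn by (intro member_le_sum) auto
  moreover have "(\<Sum>x\<in>?B. \<Sum>y\<in>?B. mu x y * gv x y) \<ge> 0" by (rule sum_nonneg) (rule inner_nn)
  ultimately show ?thesis using p unfolding AA_def by simp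
qed

end

lemma growth_contra:
  fixes A :: "nat \<Rightarrow> real" and K \<kappa> C :: real and N n1 :: nat
  assumes K: "K \<ge> 1" and mono: "\<And>n. A n \<le> A (Suc n)"
    and rec: "\<And>n. A (Suc n) \<le> 2 * K * (A (Suc (Suc n)) - A n)"
    and pos: "A N > 0" and bd: "\<And>n. n \<ge> n1 \<Longrightarrow> A n \<le> C * exp (\<kappa> * real n)"
    and kap: "\<kappa> < ln (1 + 1 / (2 * K)) / 2"
  shows False
proof -
  define \<rho> where "\<rho> = 1 + 1 / (2 * K)"
  have rho1: "\<rho> > 1" using K by (simp add: \<rho>_def)
  have step: "A (Suc (Suc n)) \<ge> \<rho> * A n" for n
  proof -
    have "A (Suc n) / (2 * K) \<le> A (Suc (Suc n)) - A n" using rec[of n] K by (simp add: field_simps)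
    moreover have "A n / (2 * K) \<le> A (Suc n) / (2 * K)" using mono[of n] K by (simp add: divide_right_mono)
    ultimately show ?thesis by (simp add: \<rho>_def algebra_simps)
  qed
  have inc: "incseq A" using mono by (simp add: incseq_SucI)
  define M where "M = max N n1"
  have AM: "A M > 0" using inc pos by (metis M_def max.cobounded1 incseq_def order_less_le_trans)
  have grow: "A (M + 2 * j) \<ge> \<rho> ^ j * A M" for j
  proof (induction j)
    case 0 then show ?case by simp
  next
    case (Suc j)
    have "\<rho> ^ Suc j * A M = \<rho> * (\<rho> ^ j * A M)" by simp
    also have "\<dots> \<le> \<rho> * A (M + 2 * j)" using Suc rho1 by (intro mult_left_mono) auto
    also have "\<dots> \<le> A (Suc (Suc (M + 2 * j)))" by (rule step)
    finally show ?case by simp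
  qed
  have e2: "exp (2 * \<kappa>) < \<rho>"
  proof -
    have "2 * \<kappa> < ln \<rho>" using kap by (simp add: \<rho>_def)
    then show ?thesis using rho1 by (metis exp_less_mono exp_ln less_trans zero_less_one)
  qed
  define r where "r = \<rho> / exp (2 * \<kappa>)"
  have r1: "r > 1" using e2 by (simp add: r_def)
  obtain j where j: "C * exp (\<kappa> * real M) / A M < r ^ j" using real_arch_pow[OF r1] by blast
  have "n1 \<le> M + 2 * j" unfolding M_def by simp
  then have "A (M + 2 * j) \<le> C * exp (\<kappa> * real (M + 2 * j))" by (rule bd)
  with grow[of j] have "\<rho> ^ j * A M \<le> C * exp (\<kappa> * real (M + 2 * j))" by (rule order_trans)
  also have "exp (\<kappa> * real (M + 2 * j)) = exp (\<kappa> * real M) * exp (2 * \<kappa>) ^ j"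
    by (simp add: exp_add[symmetric] exp_of_nat_mult[symmetric] algebra_simps)
  finally have "\<rho> ^ j * A M \<le> C * exp (\<kappa> * real M) * exp (2 * \<kappa>) ^ j" by (simp add: ac_simps)
  then have "(\<rho> ^ j / exp (2 * \<kappa>) ^ j) * A M \<le> C * exp (\<kappa> * real M)"
    by (simp add: field_simps)
  then have "r ^ j * A M \<le> C * exp (\<kappa> * real M)" by (simp add: r_def power_divide)
  then have "r ^ j \<le> C * exp (\<kappa> * real M) / A M" using AM by (simp add: field_simps)
  with j show False by simp
qed

context sol begin

lemma KK_eq: "KK = p0 / (1 - 2 powr (1 - m)) + (2 * p0) powr (q / 2) + 1"
  by (simp add: KK_def c0_def)

lemma main:
  assumes nc: "\<exists>a b. u a \<noteq> u b" and kap: "\<kappa> < ln (1 + 1 / (2 * KK)) / 2"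
    and bd: "\<forall>n\<ge>n1. W mu v0 n \<le> C * exp (\<kappa> * real n)"
  shows False
proof -
  obtain x0 where x0: "grad mu u x0 \<noteq> 0" using exists_grad[OF nc] by blast
  define A where "A n = AA (ball mu v0 n)" for n
  show False
  proof (rule growth_contra[of KK A])
    show "1 \<le> KK" by (rule KK_pos)
    show "A n \<le> A (Suc n)" for n unfolding A_def
      by (rule AA_mono[OF ball_fin[OF wg]]) (simp add: ball_mono)
    show "A (Suc n) \<le> 2 * KK * (A (Suc (Suc n)) - A n)" for n unfolding A_def by (rule AA_rec)
    show "A (gdist mu v0 x0) > 0" unfolding A_def by (rule AA_pos[OF x0]) simp
    show "A n \<le> C * exp (\<kappa> * real n)" if "n \<ge> n1" for n
      using AA_le_W[of v0 n] bd that unfolding A_def by fastforce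
    show "\<kappa> < ln (1 + 1 / (2 * KK)) / 2" by (rule kap)
  qed
qed

end

theorem theorem1p1:
  fixes p0 m p q :: real
  assumes "p0 > 1" and "m > 1"
    and "(p + q = m - 1 \<and> p \<ge> 0 \<and> q > 0) \<or> (p + q = m - 1 \<and> q < 0 \<and> m < 3)"
  shows "\<exists>k0>0. \<forall>(mu :: 'a \<Rightarrow> 'a \<Rightarrow> real) (v0 :: 'a) (\<kappa> :: real) (C :: real) (n1 :: nat).
           weighted_graph mu \<and> cond_p0 mu p0 \<and> 0 < \<kappa> \<and> \<kappa> < k0 \<and> C > 0 \<and>
           (\<forall>n\<ge>n1. W mu v0 n \<le> C * exp (\<kappa> * real n))
           \<longrightarrow> \<not> (\<exists>u. nontrivial_pos_solution mu m p q u)"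
proof -
  define K where "K = p0 / (1 - 2 powr (1 - m)) + (2 * p0) powr (q / 2) + 1"
  have c0: "1 - 2 powr (1 - m) > 0" using assms(2) by (simp add: powr_less_one)
  have K1: "K \<ge> 1" unfolding K_def using c0 assms(1) by (simp add: add_nonneg_nonneg)
  define k0 where "k0 = ln (1 + 1 / (2 * K)) / 2"
  have "1 + 1 / (2 * K) > 1" using K1 by simp
  then have "ln (1 + 1 / (2 * K)) > 0" by (rule ln_gt_zero)
  then have k0: "k0 > 0" unfolding k0_def by simp
  show ?thesis
  proof (intro exI[of _ k0] conjI allI impI k0)
    fix mu :: "'a \<Rightarrow> 'a \<Rightarrow> real" and v0 :: 'a and \<kappa> C :: real and n1 :: nat
    assume H: "weighted_graph mu \<and> cond_p0 mu p0 \<and> 0 < \<kappa> \<and> \<kappa> < k0 \<and> C > 0 \<and>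
           (\<forall>n\<ge>n1. W mu v0 n \<le> C * exp (\<kappa> * real n))"
    show "\<not> (\<exists>u. nontrivial_pos_solution mu m p q u)"
    proof
      assume "\<exists>u. nontrivial_pos_solution mu m p q u"
      then obtain u where u: "nontrivial_pos_solution mu m p q u" by blast
      interpret S: sol mu m p q p0 u
        using H assms u by unfold_locales (auto simp: nontrivial_pos_solution_def)
      have "S.KK = K" by (simp add: S.KK_eq K_def)
      show False
        by (rule S.main[of \<kappa> n1 v0 C]) (use u H \<open>S.KK = K\<close> in \<open>auto simp: nontrivial_pos_solution_def k0_def\<close>)
    qed
  qed
qed

end
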